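(* Let $O=(Y,D,Z)$ with $Y,D\in\mathbb{R}$ and $Z=(Z_1,\dots,Z_p)\in\{0,1\}^p$ (row vector), $p\ge2$, $\mu^*=\mathbb{E}(Z)$. Assume: (ALICE model) There are potential outcomes $Y(d,z)$ with $Y=Y(D,Z)$ and parameters $\beta^*\in\mathbb{R}$, $\zeta^*,\psi^*\in\mathbb{R}^p$ such that $Y(d',z')-Y(d,z)=(d'-d)\beta^*+(z'-z)\zeta^*$ for all $d,d',z,z'$ and $\mathbb{E}\{Y(0,0)\mid Z\}=Z\psi^*$; write $\pi^*=\zeta^*+\psi^*$, so that $\mathbb{E}(Y-D\beta^*\mid Z)=Z\pi^*$. (Independent instruments) $Z_1,\dots,Z_p$ are mutually independent. (Interaction relevance) For fixed $2\le q\le p$ and $r=\sum_{k=2}^q\binom pk$ (held fixed, not growing with sample size), $M=-\mathbb{E}\{(\bar Z_{2,\mu^*}^\top,\dots,\bar Z_{q,\mu^*}^\top)^\top D\}\in\mathbb{R}^r$ is nonzero. Let $\bar m(O;\beta^*,\mu^*,\pi^* )=(\bar Z_{2,\mu^*}^\top,\dots,\bar Z_{q,\mu^*}^\top)^\top(Y-D\beta^*-Z\pi^* )$ and $\Omega=\mathbb{E}\{\bar m(O;\beta^*,\mu^*,\pi^* )\bar m(O;\beta^*,\mu^*,\pi^* )^\top\}$, assumed nonsingular. Consider the semiparametric model for $O$ defined by these assumptions (equivalently, by the moment restriction $\mathbb{E}\{(\bar Z_{2,\mu^*}^\top,\dots,\bar Z_{q,\mu^*}^\top)^\top(Y-D\beta)\}=0$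 identifying $\beta^*$), in which influence functions of regular asymptotically linear estimators of $\beta^*$ have the form $(\theta^\top M)^{-1}\theta^\top \bar m(O;\beta^*,\mu^*,\pi^* )$ for $\theta\in\mathbb{R}^r$ with $\theta^\top M\neq0$. Then the efficient influence function for $\beta^*$ is the one with $\theta=\theta_{\mathrm{opt}}=\Omega^{-1}M$, i.e. $(M^\top\Omega^{-1}M)^{-1}M^\top\Omega^{-1}\bar m(O;\beta^*,\mu^*,\pi^* )$, and the semiparametric efficiency bound for $\beta^*$ is $(M^\top\Omega^{-1}M)^{-1}$.
   Context: For $1\le k\le p$ and $\mu\in\mathbb{R}^p$, $\bar Z_{k,\mu}$ is the column vector (in a fixed order) of all demeaned $k$-th order interactions $\prod_{j\in x}(Z_j-\mu_j)$ over subsets $x\subseteq\{1,\dots,p\}$ with $|x|=k$. All expectations appearing are assumed finite. *)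

theory Defs
  imports "HOL-Probability.Probability"
begin

text \<open>Index set of all interactions of order 2..q among instruments 0..p-1
  (the paper's fixed ordering of these r subsets is irrelevant; vectors in R^r
  are represented as functions on this finite index set).\<close>
definition interaction_sets :: "nat \<Rightarrow> nat \<Rightarrow> nat set set" where
  "interaction_sets p q = {x. x \<subseteq> {..<p} \<and> 2 \<le> card x \<and> card x \<le> q}"

definition Zbar :: "('a \<Rightarrow> nat \<Rightarrow> real) \<Rightarrow> (nat \<Rightarrow> real) \<Rightarrow> nat set \<Rightarrow> 'a \<Rightarrow> real" where
  "Zbar Z \<mu> x \<omega> = (\<Prod>j\<in>x. Z \<omega> j - \<mu> j)"

definition gen_sigma :: "'a measure \<Rightarrow> ('a \<Rightarrow> nat \<Rightarrow> real) \<Rightarrow> nat \<Rightarrow> 'a measure" where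
  "gen_sigma M Z p = sigma (space M)
     {(\<lambda>\<omega>. Z \<omega> j) -` B \<inter> space M | j B. j < p \<and> B \<in> sets borel}"

definition mbar :: "('a \<Rightarrow> real) \<Rightarrow> ('a \<Rightarrow> real) \<Rightarrow> ('a \<Rightarrow> nat \<Rightarrow> real) \<Rightarrow> nat
    \<Rightarrow> real \<Rightarrow> (nat \<Rightarrow> real) \<Rightarrow> (nat \<Rightarrow> real) \<Rightarrow> nat set \<Rightarrow> 'a \<Rightarrow> real" where
  "mbar Y D Z p \<beta> \<mu> \<pi> x \<omega> =
     Zbar Z \<mu> x \<omega> * (Y \<omega> - D \<omega> * \<beta> - (\<Sum>j<p. Z \<omega> j * \<pi> j))"

definition IF_theta :: "nat set set \<Rightarrow> (nat set \<Rightarrow> real) \<Rightarrow> (nat set \<Rightarrow> 'a \<Rightarrow> real)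
    \<Rightarrow> (nat set \<Rightarrow> real) \<Rightarrow> 'a \<Rightarrow> real" where
  "IF_theta S Mv m \<theta> \<omega> = (\<Sum>x\<in>S. \<theta> x * m x \<omega>) / (\<Sum>x\<in>S. \<theta> x * Mv x)"

definition IF_class :: "nat set set \<Rightarrow> (nat set \<Rightarrow> real) \<Rightarrow> (nat set \<Rightarrow> 'a \<Rightarrow> real)
    \<Rightarrow> ('a \<Rightarrow> real) set" where
  "IF_class S Mv m = {IF_theta S Mv m \<theta> | \<theta>. (\<Sum>x\<in>S. \<theta> x * Mv x) \<noteq> 0}"

definition efficient_IF :: "'a measure \<Rightarrow> ('a \<Rightarrow> real) set \<Rightarrow> ('a \<Rightarrow> real) \<Rightarrow> bool" where
  "efficient_IF M \<Phi> \<phi> \<longleftrightarrow> \<phi> \<in> \<Phi> \<and>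
     (\<forall>\<psi>\<in>\<Phi>. integral\<^sup>L M (\<lambda>\<omega>. (\<phi> \<omega>)\<^sup>2) \<le> integral\<^sup>L M (\<lambda>\<omega>. (\<psi> \<omega>)\<^sup>2))"

end

theory Submission imports Defs "Jordan_Normal_Form.Determinant" begin

lemma solve_exists:
  fixes A :: "'b \<Rightarrow> 'b \<Rightarrow> real" and b :: "'b \<Rightarrow> real"
  assumes fin: "finite S"
    and inj: "\<And>v. (\<forall>x\<in>S. (\<Sum>y\<in>S. A x y * v y) = 0) \<Longrightarrow> (\<forall>x\<in>S. v x = 0)"
  shows "\<exists>v. \<forall>x\<in>S. (\<Sum>y\<in>S. A x y * v y) = b x"
proof -
  define n where "n = card S"
  obtain f where f: "bij_betw f {0..<n} S" using ex_bij_betw_nat_finite[OF fin] n_def by blast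
  define g where "g = inv_into {0..<n} f"
  have gf: "\<And>i. i < n \<Longrightarrow> g (f i) = i" using f unfolding g_def bij_betw_def by auto
  have fg: "\<And>y. y \<in> S \<Longrightarrow> f (g y) = y" using f unfolding g_def bij_betw_def
    by (simp add: f_inv_into_f)
  have fS: "\<And>i. i < n \<Longrightarrow> f i \<in> S" using f unfolding bij_betw_def by auto
  define AM where "AM = mat n n (\<lambda>(i,j). A (f i) (f j))"
  have AMc: "AM \<in> carrier_mat n n" unfolding AM_def by simp
  have key: "\<And>u i. u \<in> carrier_vec n \<Longrightarrow> i < n \<Longrightarrow>
     (\<Sum>y\<in>S. A (f i) y * u $ g y) = (AM *\<^sub>v u) $ i"
  proof -
    fix u :: "real vec" and i assume u: "u \<in> carrier_vec n" and i: "i < n"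
    have "(\<Sum>y\<in>S. A (f i) y * u $ g y) = (\<Sum>j\<in>{0..<n}. A (f i) (f j) * u $ g (f j))"
      using sum.reindex_bij_betw[OF f, of "\<lambda>y. A (f i) y * u $ g y"] by simp
    also have "\<dots> = (\<Sum>j\<in>{0..<n}. A (f i) (f j) * u $ j)" using gf by simp
    also have "\<dots> = (AM *\<^sub>v u) $ i" using u i AMc
      by (simp add: AM_def scalar_prod_def)
    finally show "(\<Sum>y\<in>S. A (f i) y * u $ g y) = (AM *\<^sub>v u) $ i" .
  qed
  have "det AM \<noteq> 0"
  proof
    assume "det AM = 0"
    then obtain v where v: "v \<in> carrier_vec n" "v \<noteq> 0\<^sub>v n" "AM *\<^sub>v v = 0\<^sub>v n"
      using det_0_iff_vec_prod_zero[OF AMc] by blast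
    have "\<forall>x\<in>S. (\<Sum>y\<in>S. A x y * v $ g y) = 0"
    proof
      fix x assume x: "x \<in> S"
      have gx: "g x < n" using f x unfolding g_def bij_betw_def by (auto simp: inv_into_into)
      show "(\<Sum>y\<in>S. A x y * v $ g y) = 0" using key[OF v(1) gx] fg[OF x] v(3) gx by simp
    qed
    from inj[OF this] have "\<And>j. j < n \<Longrightarrow> v $ j = 0" using fS gf by fastforce
    hence "v = 0\<^sub>v n" using v(1) by (intro eq_vecI) auto
    with v(2) show False by simp
  qed
  from det_non_zero_imp_unit[OF AMc this, unfolded Units_def, of "()"]
  obtain B where B: "B \<in> carrier_mat n n" and AB: "AM * B = 1\<^sub>m n"
    by (auto simp: ring_mat_def)
  define bv where "bv = vec n (\<lambda>i. b (f i))"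
  define u where "u = B *\<^sub>v bv"
  have uc: "u \<in> carrier_vec n" using B by (simp add: u_def bv_def)
  have "AM *\<^sub>v u = bv" unfolding u_def using AMc B AB
    by (simp add: assoc_mult_mat_vec[symmetric] bv_def)
  show ?thesis
  proof (intro exI ballI)
    fix x assume x: "x \<in> S"
    have gx: "g x < n" using f x unfolding g_def bij_betw_def by (auto simp: inv_into_into)
    show "(\<Sum>y\<in>S. A x y * u $ g y) = b x"
      using key[OF uc gx] fg[OF x] \<open>AM *\<^sub>v u = bv\<close> gx by (simp add: bv_def)
  qed
qed

lemma Zbar_bound:
  assumes "x \<subseteq> {..<p}" "\<And>j. j < p \<Longrightarrow> Z \<omega> j \<in> {0, 1::real}"
  shows "\<bar>Zbar Z \<mu> x \<omega>\<bar> \<le> (\<Prod>j\<in>x. 1 + \<bar>\<mu> j\<bar>)"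
proof -
  have "\<bar>Zbar Z \<mu> x \<omega>\<bar> = (\<Prod>j\<in>x. \<bar>Z \<omega> j - \<mu> j\<bar>)" by (simp add: Zbar_def abs_prod)
  also have "\<dots> \<le> (\<Prod>j\<in>x. 1 + \<bar>\<mu> j\<bar>)"
  proof (rule prod_mono)
    fix j assume "j \<in> x"
    then have "Z \<omega> j \<in> {0,1}" using assms by auto
    then show "0 \<le> \<bar>Z \<omega> j - \<mu> j\<bar> \<and> \<bar>Z \<omega> j - \<mu> j\<bar> \<le> 1 + \<bar>\<mu> j\<bar>" by auto
  qed
  finally show ?thesis .
qed

theorem theorem2:
  fixes M :: "'a measure"
    and Y D :: "'a \<Rightarrow> real"
    and Z :: "'a \<Rightarrow> nat \<Rightarrow> real"
    and Yp :: "real \<Rightarrow> (nat \<Rightarrow> real) \<Rightarrow> 'a \<Rightarrow> real"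
    and p q :: nat
    and \<beta> :: real
    and \<zeta> \<psi> \<pi> \<mu> :: "nat \<Rightarrow> real"
  defines "S \<equiv> interaction_sets p q"
      and "m \<equiv> mbar Y D Z p \<beta> \<mu> \<pi>"
      and "Mv \<equiv> (\<lambda>x. - prob_space.expectation M (\<lambda>\<omega>. Zbar Z \<mu> x \<omega> * D \<omega>))"
      and "\<Omega> \<equiv> (\<lambda>x y. prob_space.expectation M (\<lambda>\<omega>. mbar Y D Z p \<beta> \<mu> \<pi> x \<omega> * mbar Y D Z p \<beta> \<mu> \<pi> y \<omega>))"
  assumes P: "prob_space M"
    and p2: "2 \<le> p" and q2: "2 \<le> q" and qp: "q \<le> p"
    and Y_rv: "Y \<in> borel_measurable M" and D_rv: "D \<in> borel_measurable M"
    and Z_rv: "\<And>j. j < p \<Longrightarrow> (\<lambda>\<omega>. Z \<omega> j) \<in> borel_measurable M"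
    and Z_bin: "\<And>\<omega> j. \<omega> \<in> space M \<Longrightarrow> j < p \<Longrightarrow> Z \<omega> j \<in> {0, 1}"
    and mu_def: "\<And>j. j < p \<Longrightarrow> \<mu> j = prob_space.expectation M (\<lambda>\<omega>. Z \<omega> j)"
    \<comment> \<open>ALICE model\<close>
    and Yp_rv: "\<And>d z. Yp d z \<in> borel_measurable M"
    and consist: "\<And>\<omega>. \<omega> \<in> space M \<Longrightarrow> Y \<omega> = Yp (D \<omega>) (Z \<omega>) \<omega>"
    and alice: "\<And>\<omega> d d' z z'. \<omega> \<in> space M \<Longrightarrow>
        (\<forall>j<p. z j \<in> {0, 1}) \<Longrightarrow> (\<forall>j<p. z' j \<in> {0, 1}) \<Longrightarrow>
        Yp d' z' \<omega> - Yp d z \<omega> = (d' - d) * \<beta> + (\<Sum>j<p. (z' j - z j) * \<zeta> j)"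
    and Y00_int: "integrable M (Yp 0 (\<lambda>_. 0))"
    and cond_Y00: "AE \<omega> in M. real_cond_exp M (gen_sigma M Z p) (Yp 0 (\<lambda>_. 0)) \<omega>
                     = (\<Sum>j<p. Z \<omega> j * \<psi> j)"
    and pi_def: "\<And>j. \<pi> j = \<zeta> j + \<psi> j"
    \<comment> \<open>finiteness of the expectations appearing\<close>
    and D_int: "integrable M D"
    and res_sq_int: "integrable M (\<lambda>\<omega>. (Y \<omega> - D \<omega> * \<beta> - (\<Sum>j<p. Z \<omega> j * \<pi> j))\<^sup>2)"
    \<comment> \<open>independent instruments\<close>
    and indep: "prob_space.indep_vars M (\<lambda>_. borel) (\<lambda>j \<omega>. Z \<omega> j) {..<p}"
    \<comment> \<open>interaction relevance\<close>
    and M_nz: "\<exists>x\<in>S. Mv x \<noteq> 0"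
    \<comment> \<open>Omega nonsingular\<close>
    and Omega_nonsing: "\<And>v. (\<forall>x\<in>S. (\<Sum>y\<in>S. \<Omega> x y * v y) = 0) \<Longrightarrow> (\<forall>x\<in>S. v x = 0)"
  shows "(\<exists>\<theta>opt. \<forall>x\<in>S. (\<Sum>y\<in>S. \<Omega> x y * \<theta>opt y) = Mv x) \<and>
    (\<forall>\<theta>opt. (\<forall>x\<in>S. (\<Sum>y\<in>S. \<Omega> x y * \<theta>opt y) = Mv x) \<longrightarrow>
       (\<Sum>x\<in>S. \<theta>opt x * Mv x) \<noteq> 0 \<and>
       efficient_IF M (IF_class S Mv m) (IF_theta S Mv m \<theta>opt) \<and>
       (\<forall>\<phi>. efficient_IF M (IF_class S Mv m) \<phi> \<longrightarrow>
            (AE \<omega> in M. \<phi> \<omega> = IF_theta S Mv m \<theta>opt \<omega>)) \<and>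
       prob_space.expectation M (\<lambda>\<omega>. (IF_theta S Mv m \<theta>opt \<omega>)\<^sup>2)
         = 1 / (\<Sum>x\<in>S. \<theta>opt x * Mv x))"
proof -
  interpret prob_space M by (rule P)
  have Ssub: "S \<subseteq> Pow {..<p}" unfolding S_def interaction_sets_def by auto
  have finS: "finite S" by (rule finite_subset[OF Ssub]) simp
  define R where "R = (\<lambda>\<omega>. Y \<omega> - D \<omega> * \<beta> - (\<Sum>j<p. Z \<omega> j * \<pi> j))"
  have R_meas: "R \<in> borel_measurable M" unfolding R_def using Y_rv D_rv Z_rv by measurable
  have R2: "integrable M (\<lambda>\<omega>. (R \<omega>)\<^sup>2)" using res_sq_int unfolding R_def .
  have m_eq: "\<And>x \<omega>. m x \<omega> = Zbar Z \<mu> x \<omega> * R \<omega>" unfolding m_def mbar_def R_def by simp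
  have Zbar_meas: "\<And>x. x \<in> S \<Longrightarrow> Zbar Z \<mu> x \<in> borel_measurable M"
  proof -
    fix x assume "x \<in> S"
    then have "x \<subseteq> {..<p}" using Ssub by auto
    then show "Zbar Z \<mu> x \<in> borel_measurable M" unfolding Zbar_def
      using Z_rv by (intro borel_measurable_prod) auto
  qed
  have m_meas: "\<And>x. x \<in> S \<Longrightarrow> m x \<in> borel_measurable M"
    unfolding m_eq using Zbar_meas R_meas by measurable
  have mI: "integrable M (\<lambda>\<omega>. m x \<omega> * m y \<omega>)" if x: "x \<in> S" and y: "y \<in> S" for x y
  proof (rule Bochner_Integration.integrable_bound)
    define Cx where "Cx = (\<Prod>j\<in>x. 1 + \<bar>\<mu> j\<bar>)"
    define Cy where "Cy = (\<Prod>j\<in>y. 1 + \<bar>\<mu> j\<bar>)"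
    show "integrable M (\<lambda>\<omega>. Cx * Cy * (R \<omega>)\<^sup>2)" using R2 by simp
    show "(\<lambda>\<omega>. m x \<omega> * m y \<omega>) \<in> borel_measurable M" using m_meas x y by measurable
    have Cx0: "0 \<le> Cx" unfolding Cx_def by (intro prod_nonneg) auto
    have Cy0: "0 \<le> Cy" unfolding Cy_def by (intro prod_nonneg) auto
    show "AE \<omega> in M. norm (m x \<omega> * m y \<omega>) \<le> norm (Cx * Cy * (R \<omega>)\<^sup>2)"
    proof (rule AE_I2)
      fix \<omega> assume w: "\<omega> \<in> space M"
      have bx: "\<bar>Zbar Z \<mu> x \<omega>\<bar> \<le> Cx" unfolding Cx_def
        using Zbar_bound[of x p Z \<omega> \<mu>] x Ssub Z_bin[OF w] by auto
      have by': "\<bar>Zbar Z \<mu> y \<omega>\<bar> \<le> Cy" unfolding Cy_def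
        using Zbar_bound[of y p Z \<omega> \<mu>] y Ssub Z_bin[OF w] by auto
      have "norm (m x \<omega> * m y \<omega>) = \<bar>Zbar Z \<mu> x \<omega>\<bar> * \<bar>Zbar Z \<mu> y \<omega>\<bar> * (R \<omega>)\<^sup>2"
        by (simp add: m_eq abs_mult power2_eq_square)
      also have "\<dots> \<le> Cx * Cy * (R \<omega>)\<^sup>2"
        by (intro mult_right_mono mult_mono bx by') (auto simp: Cx0)
      finally show "norm (m x \<omega> * m y \<omega>) \<le> norm (Cx * Cy * (R \<omega>)\<^sup>2)"
        using Cx0 Cy0 by simp
    qed
  qed
  have Om: "\<Omega> x y = integral\<^sup>L M (\<lambda>\<omega>. m x \<omega> * m y \<omega>)" for x y
    unfolding \<Omega>_def m_def by simp
  define s where "s = (\<lambda>a \<omega>. \<Sum>x\<in>S. a x * m x \<omega>)"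
  define c where "c = (\<lambda>a. \<Sum>x\<in>S. a x * Mv x)"
  have s_prod: "s a \<omega> * s b \<omega> = (\<Sum>x\<in>S. \<Sum>y\<in>S. a x * b y * (m x \<omega> * m y \<omega>))" for a b \<omega>
    unfolding s_def sum_product by (intro sum.cong refl) (simp add: algebra_simps)
  have bilI: "integrable M (\<lambda>\<omega>. s a \<omega> * s b \<omega>)" for a b
    unfolding s_prod by (auto intro!: Bochner_Integration.integrable_sum Bochner_Integration.integrable_mult_right mI)
  have bil: "integral\<^sup>L M (\<lambda>\<omega>. s a \<omega> * s b \<omega>) = (\<Sum>x\<in>S. a x * (\<Sum>y\<in>S. \<Omega> x y * b y))" for a b
  proof -
    have "integral\<^sup>L M (\<lambda>\<omega>. s a \<omega> * s b \<omega>) = (\<Sum>x\<in>S. \<Sum>y\<in>S. a x * b y * \<Omega> x y)"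
      unfolding s_prod Om
      by (subst Bochner_Integration.integral_sum,
          force intro!: Bochner_Integration.integrable_sum Bochner_Integration.integrable_mult_right mI)
         (intro sum.cong refl, subst Bochner_Integration.integral_sum,
          auto intro!: Bochner_Integration.integrable_mult_right mI)
    also have "\<dots> = (\<Sum>x\<in>S. a x * (\<Sum>y\<in>S. \<Omega> x y * b y))"
      by (simp add: sum_distrib_left algebra_simps)
    finally show ?thesis .
  qed
  have IFs: "IF_theta S Mv m a = (\<lambda>\<omega>. s a \<omega> / c a)" for a
    unfolding IF_theta_def s_def c_def by simp
  obtain t0 where t0: "\<forall>x\<in>S. (\<Sum>y\<in>S. \<Omega> x y * t0 y) = Mv x"
    using solve_exists[OF finS Omega_nonsing, where b = Mv] by blast
  show ?thesis
  proof (intro conjI allI impI)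
    show "\<exists>\<theta>opt. \<forall>x\<in>S. (\<Sum>y\<in>S. \<Omega> x y * \<theta>opt y) = Mv x" using t0 by blast
  next
    fix to assume to: "\<forall>x\<in>S. (\<Sum>y\<in>S. \<Omega> x y * to y) = Mv x"
    have cross: "integral\<^sup>L M (\<lambda>\<omega>. s a \<omega> * s to \<omega>) = c a" for a
      unfolding bil c_def using to by simp
    have co: "c to \<noteq> 0"
    proof
      assume "c to = 0"
      then have "integral\<^sup>L M (\<lambda>\<omega>. s to \<omega> * s to \<omega>) = 0" using cross by simp
      then have AE0: "AE \<omega> in M. s to \<omega> * s to \<omega> = 0"
        using integral_nonneg_eq_0_iff_AE[OF bilI] by simp
      obtain x where x: "x \<in> S" "Mv x \<noteq> 0" using M_nz by blast
      define e where "e = (\<lambda>y. if y = x then 1 else (0::real))"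
      have "integral\<^sup>L M (\<lambda>\<omega>. s e \<omega> * s to \<omega>) = Mv x"
      proof -
        have "(\<Sum>y\<in>S. e y * Mv y) = (\<Sum>y\<in>S. if y = x then Mv y else 0)"
          by (rule sum.cong) (auto simp: e_def)
        also have "\<dots> = Mv x" using x finS by (simp add: sum.delta)
        finally show ?thesis unfolding cross c_def .
      qed
      moreover have "integral\<^sup>L M (\<lambda>\<omega>. s e \<omega> * s to \<omega>) = 0"
        using AE0 by (subst integral_cong_AE[where g = "\<lambda>_. 0"]) (auto simp: bilI[THEN borel_measurable_integrable])
      ultimately show False using x by simp
    qed
    show co': "(\<Sum>x\<in>S. to x * Mv x) \<noteq> 0" using co unfolding c_def .
    have sq_eq: "(s a \<omega> / c a)\<^sup>2 = s a \<omega> * s a \<omega> / (c a)\<^sup>2" for a \<omega>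
      by (simp add: power2_eq_square)
    have IF2I: "integrable M (\<lambda>\<omega>. (IF_theta S Mv m a \<omega>)\<^sup>2)" for a
      unfolding IFs sq_eq using bilI by simp
    have IF2: "integral\<^sup>L M (\<lambda>\<omega>. (IF_theta S Mv m a \<omega>)\<^sup>2)
        = integral\<^sup>L M (\<lambda>\<omega>. s a \<omega> * s a \<omega>) / (c a)\<^sup>2" for a
      unfolding IFs sq_eq by simp
    have IFo: "integral\<^sup>L M (\<lambda>\<omega>. (IF_theta S Mv m to \<omega>)\<^sup>2) = 1 / c to"
      unfolding IF2 cross using co by (simp add: power2_eq_square)
    have diff: "integrable M (\<lambda>\<omega>. (IF_theta S Mv m a \<omega> - IF_theta S Mv m to \<omega>)\<^sup>2) \<and>
       integral\<^sup>L M (\<lambda>\<omega>. (IF_theta S Mv m a \<omega> - IF_theta S Mv m to \<omega>)\<^sup>2)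
        = integral\<^sup>L M (\<lambda>\<omega>. (IF_theta S Mv m a \<omega>)\<^sup>2) - 1 / c to"
      if ca: "c a \<noteq> 0" for a
    proof -
      have pw: "(IF_theta S Mv m a \<omega> - IF_theta S Mv m to \<omega>)\<^sup>2 =
         s a \<omega> * s a \<omega> / (c a)\<^sup>2 - 2 * (s a \<omega> * s to \<omega>) / (c a * c to)
           + s to \<omega> * s to \<omega> / (c to)\<^sup>2" for \<omega>
        unfolding IFs using ca co by (simp add: field_simps power2_eq_square)
      have I: "integrable M (\<lambda>\<omega>. (IF_theta S Mv m a \<omega> - IF_theta S Mv m to \<omega>)\<^sup>2)"
        unfolding pw using bilI by simp
      have "integral\<^sup>L M (\<lambda>\<omega>. (IF_theta S Mv m a \<omega> - IF_theta S Mv m to \<omega>)\<^sup>2)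
         = integral\<^sup>L M (\<lambda>\<omega>. s a \<omega> * s a \<omega>) / (c a)\<^sup>2 - 2 * c a / (c a * c to) + c to / (c to)\<^sup>2"
      proof -
        have i1: "integrable M (\<lambda>\<omega>. s a \<omega> * s a \<omega> / (c a)\<^sup>2)" using bilI by simp
        have i2: "integrable M (\<lambda>\<omega>. 2 * (s a \<omega> * s to \<omega>) / (c a * c to))" using bilI by simp
        have i3: "integrable M (\<lambda>\<omega>. s to \<omega> * s to \<omega> / (c to)\<^sup>2)" using bilI by simp
        have "integral\<^sup>L M (\<lambda>\<omega>. s a \<omega> * s a \<omega> / (c a)\<^sup>2 - 2 * (s a \<omega> * s to \<omega>) / (c a * c to)
           + s to \<omega> * s to \<omega> / (c to)\<^sup>2)
          = integral\<^sup>L M (\<lambda>\<omega>. s a \<omega> * s a \<omega> / (c a)\<^sup>2) - integral\<^sup>L M (\<lambda>\<omega>. 2 * (s a \<omega> * s to \<omega>) / (c a * c to))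
           + integral\<^sup>L M (\<lambda>\<omega>. s to \<omega> * s to \<omega> / (c to)\<^sup>2)"
          using Bochner_Integration.integral_add[OF Bochner_Integration.integrable_diff[OF i1 i2] i3]
                Bochner_Integration.integral_diff[OF i1 i2] by simp
        also have "\<dots> = integral\<^sup>L M (\<lambda>\<omega>. s a \<omega> * s a \<omega>) / (c a)\<^sup>2 - 2 * c a / (c a * c to) + c to / (c to)\<^sup>2"
          using Bochner_Integration.integral_divide_zero[of M "\<lambda>\<omega>. 2 * (s a \<omega> * s to \<omega>)" "c a * c to"]
                Bochner_Integration.integral_divide_zero[of M "\<lambda>\<omega>. s a \<omega> * s a \<omega>" "(c a)\<^sup>2"]
                Bochner_Integration.integral_divide_zero[of M "\<lambda>\<omega>. s to \<omega> * s to \<omega>" "(c to)\<^sup>2"]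
                Bochner_Integration.integral_mult_right_zero[of M 2 "\<lambda>\<omega>. s a \<omega> * s to \<omega>"]
                cross[of a] cross[of to]
          by presburger
        finally show ?thesis unfolding pw .
      qed
      also have "\<dots> = integral\<^sup>L M (\<lambda>\<omega>. (IF_theta S Mv m a \<omega>)\<^sup>2) - 1 / c to"
        unfolding IF2 using ca co by (simp add: field_simps power2_eq_square)
      finally show ?thesis using I by simp
    qed
    have inclass: "\<psi> \<in> IF_class S Mv m \<Longrightarrow> \<exists>a. c a \<noteq> 0 \<and> \<psi> = IF_theta S Mv m a" for \<psi>
      unfolding IF_class_def c_def by blast
    show "efficient_IF M (IF_class S Mv m) (IF_theta S Mv m to)"
      unfolding efficient_IF_def
    proof (intro conjI ballI)
      show "IF_theta S Mv m to \<in> IF_class S Mv m" unfolding IF_class_def using co' by blast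
    next
      fix \<psi> assume "\<psi> \<in> IF_class S Mv m"
      then obtain a where a: "c a \<noteq> 0" "\<psi> = IF_theta S Mv m a" using inclass by blast
      have "0 \<le> integral\<^sup>L M (\<lambda>\<omega>. (IF_theta S Mv m a \<omega> - IF_theta S Mv m to \<omega>)\<^sup>2)"
        by (rule integral_nonneg_AE) simp
      then show "integral\<^sup>L M (\<lambda>\<omega>. (IF_theta S Mv m to \<omega>)\<^sup>2) \<le> integral\<^sup>L M (\<lambda>\<omega>. (\<psi> \<omega>)\<^sup>2)"
        using diff[OF a(1)] a(2) IFo by simp
    qed
    show "AE \<omega> in M. \<phi> \<omega> = IF_theta S Mv m to \<omega>"
      if eff: "efficient_IF M (IF_class S Mv m) \<phi>" for \<phi>
    proof -
      from eff have "\<phi> \<in> IF_class S Mv m" unfolding efficient_IF_def by blast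
      then obtain a where a: "c a \<noteq> 0" "\<phi> = IF_theta S Mv m a" using inclass by blast
      have "IF_theta S Mv m to \<in> IF_class S Mv m" unfolding IF_class_def using co' by blast
      with eff have le: "integral\<^sup>L M (\<lambda>\<omega>. (\<phi> \<omega>)\<^sup>2) \<le> integral\<^sup>L M (\<lambda>\<omega>. (IF_theta S Mv m to \<omega>)\<^sup>2)"
        unfolding efficient_IF_def by blast
      have ge: "0 \<le> integral\<^sup>L M (\<lambda>\<omega>. (IF_theta S Mv m a \<omega> - IF_theta S Mv m to \<omega>)\<^sup>2)"
        by (rule integral_nonneg_AE) simp
      have "integral\<^sup>L M (\<lambda>\<omega>. (IF_theta S Mv m a \<omega> - IF_theta S Mv m to \<omega>)\<^sup>2) = 0"
        using diff[OF a(1)] a(2) IFo le ge by simp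
      then have "AE \<omega> in M. (IF_theta S Mv m a \<omega> - IF_theta S Mv m to \<omega>)\<^sup>2 = 0"
        by (rule iffD1[OF integral_nonneg_eq_0_iff_AE[OF conjunct1[OF diff[OF a(1)]] AE_I2[OF zero_le_power2]]])
      then show ?thesis using a(2) by (simp add: eventually_mono)
    qed
    show "expectation (\<lambda>\<omega>. (IF_theta S Mv m to \<omega>)\<^sup>2) = 1 / (\<Sum>x\<in>S. to x * Mv x)"
      using IFo unfolding c_def by simp
  qed
qed
end
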